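(* For all integers $m\ge 2$, $n\ge 2$ there exist a complete DFA $M$ with $m$ states and a complete DFA $N$ with $n$ states such that every DFA accepting $L(M)^R\cup L(N)$ has at least $2^m\cdot n-n+1$ states. In particular this holds for the following DFAs over $\Sigma=\{a,b,c,d\}$: $M=(\{0,\dots,m-1\},\Sigma,\delta_M,0,\{0\})$ with $\delta_M(0,a)=m-1$, $\delta_M(i,a)=i-1$ for $1\le i\le m-1$; $\delta_M(0,b)=1$, $\delta_M(i,b)=i$ for $1\le i\le m-1$; $\delta_M(0,c)=1$, $\delta_M(1,c)=0$, $\delta_M(j,c)=j$ for $2\le j\le m-1$; $\delta_M(i,d)=i$ for all $i$; and $N=(\{0,\dots,n-1\},\Sigma,\delta_N,0,\{0\})$ with $\delta_N(i,a)=\delta_N(i,b)=\delta_N(i,c)=i$ and $\delta_N(i,d)=i+1\bmod n$ for all $i$.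
   Context: DFAs are complete deterministic finite automata $(Q,\Sigma,\delta,s,F)$; $L(M)$ is the accepted language; $L^R=\{w^R: w\in L\}$ is the reversal of $L$. *)

theory Defs
  imports Main
begin

record ('s, 'a) dfa =
  states :: "'s set"
  alph   :: "'a set"
  trans  :: "'s \<Rightarrow> 'a \<Rightarrow> 's"
  start  :: 's
  final  :: "'s set"

definition is_dfa :: "('s, 'a) dfa \<Rightarrow> bool" where
  "is_dfa M \<longleftrightarrow> finite (states M) \<and> finite (alph M) \<and> start M \<in> states M
     \<and> final M \<subseteq> states M
     \<and> (\<forall>q\<in>states M. \<forall>x\<in>alph M. trans M q x \<in> states M)"

definition lang :: "('s, 'a) dfa \<Rightarrow> 'a list set" where
  "lang M = {w. set w \<subseteq> alph M \<and> foldl (trans M) (start M) w \<in> final M}"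

definition rev_lang :: "'a list set \<Rightarrow> 'a list set" where
  "rev_lang L = rev ` L"

datatype sym = a | b | c | d

definition sigma4 :: "sym set" where
  "sigma4 = {a, b, c, d}"

definition deltaM :: "nat \<Rightarrow> nat \<Rightarrow> sym \<Rightarrow> nat" where
  "deltaM m q x = (case x of
      a \<Rightarrow> (if q = 0 then m - 1 else q - 1)
    | b \<Rightarrow> (if q = 0 then 1 else q)
    | c \<Rightarrow> (if q = 0 then 1 else if q = 1 then 0 else q)
    | d \<Rightarrow> q)"

definition deltaN :: "nat \<Rightarrow> nat \<Rightarrow> sym \<Rightarrow> nat" where
  "deltaN n q x = (case x of d \<Rightarrow> (q + 1) mod n | _ \<Rightarrow> q)"

definition dfaM :: "nat \<Rightarrow> (nat, sym) dfa" where
  "dfaM m = \<lparr>states = {0..<m}, alph = sigma4, trans = deltaM m, start = 0, final = {0}\<rparr>"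

definition dfaN :: "nat \<Rightarrow> (nat, sym) dfa" where
  "dfaN n = \<lparr>states = {0..<n}, alph = sigma4, trans = deltaN n, start = 0, final = {0}\<rparr>"

text \<open>Every complete DFA over the alphabet of M accepting L(M)^R \<union> L(N) has at least k states.
  States of the competing DFA range over nat (any finite state set can be renamed into nat).\<close>
definition union_rev_lower_bound :: "(nat, sym) dfa \<Rightarrow> (nat, sym) dfa \<Rightarrow> nat \<Rightarrow> bool" where
  "union_rev_lower_bound M N k \<longleftrightarrow>
     (\<forall>A :: (nat, sym) dfa. is_dfa A \<and> alph A = alph M
        \<and> lang A = rev_lang (lang M) \<union> lang N \<longrightarrow> k \<le> card (states A))"

end

theory Submission
  imports Defs
begin



definition cntd :: "sym list \<Rightarrow> nat" where "cntd w = length (filter (\<lambda>x. x = d) w)"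

definition rotf :: "nat \<Rightarrow> nat \<Rightarrow> nat" where
 "rotf m q = (if q = 0 then 0 else if q = 1 then m - 1 else q - 1)"

lemma sigma4_UNIV: "sigma4 = UNIV"
proof -
  have "x \<in> sigma4" for x by (cases x) (auto simp: sigma4_def)
  thus ?thesis by auto
qed

lemma deltaM_lt: "2 \<le> m \<Longrightarrow> q < m \<Longrightarrow> deltaM m q x < m"
  by (cases x) (auto simp: deltaM_def)

lemma dM_lt: "2 \<le> m \<Longrightarrow> p < m \<Longrightarrow> foldl (deltaM m) p w < m"
  by (induction w arbitrary: p) (auto simp: deltaM_lt)

lemma deltaN_lt: "0 < n \<Longrightarrow> q < n \<Longrightarrow> deltaN n q x < n"
  by (cases x) (auto simp: deltaN_def)

lemma dN: "q < n \<Longrightarrow> foldl (deltaN n) q w = (q + cntd w) mod n"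
proof (induction w arbitrary: q)
  case Nil then show ?case by (simp add: cntd_def)
next
  case (Cons x w)
  have n0: "0 < n" using Cons.prems by simp
  show ?case
  proof (cases "x = d")
    case True
    have "foldl (deltaN n) q (x # w) = ((q+1) mod n + cntd w) mod n"
      using Cons.IH[of "(q+1) mod n"] n0 True by (simp add: deltaN_def[of n q])
    also have "\<dots> = (q + cntd (x#w)) mod n" using True by (simp add: cntd_def mod_add_left_eq)
    finally show ?thesis .
  next
    case False
    then have "deltaN n q x = q" by (cases x) (auto simp: deltaN_def)
    then show ?thesis using Cons False by (simp add: cntd_def)
  qed
qed

lemma dM_ca: "foldl (deltaM m) q [c, a] = rotf m q"
  by (simp add: deltaM_def rotf_def)

lemma dM_cbc: "foldl (deltaM m) q [c, b, c] = (if q = 1 then 0 else q)"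
  by (simp add: deltaM_def)

lemma dM_rep_ca: "foldl (deltaM m) q (concat (replicate k [c, a])) = (rotf m ^^ k) q"
proof (induction k arbitrary: q)
  case 0 then show ?case by simp
next
  case (Suc k)
  have "foldl (deltaM m) q (concat (replicate (Suc k) [c, a]))
      = foldl (deltaM m) (foldl (deltaM m) q [c,a]) (concat (replicate k [c, a]))"
    by simp
  also have "\<dots> = (rotf m ^^ k) (rotf m q)" using Suc dM_ca by simp
  finally show ?case by (simp only: funpow_Suc_right comp_def)
qed

lemma cntd_rep_ca: "cntd (concat (replicate k [c, a])) = 0"
  by (induction k) (auto simp: cntd_def)

lemma rot0: "(rotf m ^^ k) 0 = 0"
  by (induction k) (auto simp: rotf_def)

lemma rot_down: "j < x \<Longrightarrow> (rotf m ^^ j) x = x - j"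
proof (induction j)
  case 0 then show ?case by simp
next
  case (Suc j)
  then have "(rotf m ^^ Suc j) x = rotf m (x - j)" by simp
  also have "\<dots> = x - Suc j" using Suc.prems by (simp add: rotf_def)
  finally show ?case .
qed

lemma rot_full: assumes "1 \<le> q" "q < m" shows "(rotf m ^^ (m - 1)) q = q"
proof -
  have e: "m - 1 = (m - 1 - q) + (Suc 0 + (q - 1))" using assms by simp
  have "(rotf m ^^ (Suc 0 + (q - 1))) q = rotf m ((rotf m ^^ (q - 1)) q)" by simp
  also have "\<dots> = rotf m 1" using rot_down[of "q - 1" q m] assms by simp
  also have "\<dots> = m - 1" by (simp add: rotf_def)
  finally have h: "(rotf m ^^ (Suc 0 + (q - 1))) q = m - 1" .
  have "(rotf m ^^ (m - 1)) q = (rotf m ^^ (m - 1 - q)) (m - 1)"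
    by (metis e funpow_add comp_apply h)
  also have "\<dots> = q"
  proof (cases "m - 1 - q = 0")
    case True then show ?thesis using assms by simp
  next
    case False then show ?thesis using rot_down[of "m - 1 - q" "m - 1" m] assms by simp
  qed
  finally show ?thesis .
qed

definition Gw :: "nat \<Rightarrow> nat \<Rightarrow> sym list" where
  "Gw m x = concat (replicate (x - 1) [c, a]) @ [c, b, c] @ concat (replicate (m - x) [c, a])"

lemma cntd_Gw: "cntd (Gw m x) = 0"
  using cntd_rep_ca by (simp add: Gw_def cntd_def)

lemma dM_Gw:
  assumes "1 \<le> x" "x < m" "p < m"
  shows "foldl (deltaM m) p (Gw m x) = (if p = x then 0 else p)"
proof -
  let ?f = "rotf m"
  have main: "foldl (deltaM m) p (Gw m x) = (?f ^^ (m - x)) ((\<lambda>y. if y = 1 then 0 else y) ((?f ^^ (x - 1)) p))"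
    unfolding Gw_def foldl_append dM_rep_ca dM_cbc by simp
  have comp: "(?f ^^ (m - x)) ((?f ^^ (x - 1)) q) = (?f ^^ (m - 1)) q" for q
  proof -
    have "m - 1 = (m - x) + (x - 1)" using assms by simp
    then show ?thesis by (metis comp_apply funpow_add)
  qed
  have x1: "(?f ^^ (x - 1)) x = 1" using rot_down[of "x - 1" x m] assms by simp
  show ?thesis
  proof (cases "p = x")
    case True then show ?thesis using main x1 rot0 by simp
  next
    case False
    show ?thesis
    proof (cases "p = 0")
      case True then show ?thesis using main rot0 by simp
    next
      case p0: False
      let ?y = "(?f ^^ (x - 1)) p"
      have fp: "(?f ^^ (m - 1)) p = p" using rot_full[of p m] p0 assms by simp
      have fx: "(?f ^^ (m - 1)) x = x" using rot_full[of x m] assms by simp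
      have "?y \<noteq> 1"
      proof
        assume "?y = 1"
        then have "(?f ^^ (m - x)) ?y = (?f ^^ (m - x)) ((?f ^^ (x - 1)) x)" using x1 by simp
        then have "p = x" using comp fp fx by simp
        then show False using False by simp
      qed
      then show ?thesis using main comp fp False by simp
    qed
  qed
qed




lemma dM_rep_a: assumes "2 \<le> m" "p < m"
  shows "foldl (deltaM m) p (replicate k a) = (p + k * (m - 1)) mod m"
  using assms(2)
proof (induction k arbitrary: p)
  case 0 then show ?case by simp
next
  case (Suc k)
  have da: "deltaM m p a = (p + (m - 1)) mod m"
  proof (cases "p = 0")
    case True then show ?thesis using assms by (simp add: deltaM_def)
  next
    case False
    then have "p + (m - 1) = (p - 1) + m" using assms by simp
    then have "(p + (m - 1)) mod m = (p - 1 + m) mod m" by (simp only:)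
    also have "\<dots> = p - 1" using Suc.prems by simp
    finally have e: "(p + (m - 1)) mod m = p - 1" .
    have "deltaM m p a = p - 1" using False by (simp add: deltaM_def)
    then show ?thesis using e by simp
  qed
  have lt: "deltaM m p a < m" using deltaM_lt assms Suc.prems by blast
  have "foldl (deltaM m) p (replicate (Suc k) a) = foldl (deltaM m) (deltaM m p a) (replicate k a)"
    by simp
  also have "\<dots> = ((p + (m - 1)) mod m + k * (m - 1)) mod m" using Suc.IH[OF lt] da by simp
  also have "\<dots> = (p + Suc k * (m - 1)) mod m" by (simp add: mod_add_left_eq add.assoc)
  finally show ?case .
qed

lemma dM_rep_d: "foldl (deltaM m) p (replicate k d) = p"
  by (induction k) (auto simp: deltaM_def)

lemma cntd_rep_a: "cntd (replicate k a) = 0"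
  by (simp add: cntd_def)

lemma reach: assumes "2 \<le> m" "q < m"
  shows "foldl (deltaM m) 0 (replicate (m - q) a) = q"
proof -
  obtain s where s: "m = Suc (q + s)" using less_imp_Suc_add[OF assms(2)] by blast
  have e1: "m - q = Suc s" "m - 1 = q + s" using s by simp_all
  have e2: "Suc s * (q + s) = q + s * m" unfolding s by (simp add: algebra_simps)
  have "foldl (deltaM m) 0 (replicate (m - q) a) = (0 + (m - q) * (m - 1)) mod m"
    using dM_rep_a[OF assms(1), of 0 "m - q"] assms by simp
  also have "\<dots> = (q + s * m) mod m" unfolding e1 e2 by simp
  also have "\<dots> = q" using assms(2) by simp
  finally show ?thesis .
qed

lemma v0_with0:
  assumes m2: "2 \<le> m" and "finite X" "X \<subseteq> {1..<m}"
  shows "\<exists>v. cntd v = 0 \<and> (\<forall>p<m. foldl (deltaM m) p v = 0 \<longleftrightarrow> p \<in> insert 0 X)"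
  using assms(2,3)
proof (induction X rule: finite_induct)
  case empty
  show ?case by (rule exI[of _ "[]"]) (simp add: cntd_def)
next
  case (insert x X)
  then obtain v where v: "cntd v = 0" "\<forall>p<m. foldl (deltaM m) p v = 0 \<longleftrightarrow> p \<in> insert 0 X"
    by auto
  have x: "1 \<le> x" "x < m" using insert.prems by auto
  show ?case
  proof (rule exI[of _ "Gw m x @ v"], intro conjI allI impI)
    show "cntd (Gw m x @ v) = 0" using v(1) cntd_Gw[of m x] by (simp add: cntd_def)
  next
    fix p assume p: "p < m"
    have h: "foldl (deltaM m) p (Gw m x @ v) = foldl (deltaM m) (if p = x then 0 else p) v"
      by (simp only: foldl_append dM_Gw[OF x p])
    show "foldl (deltaM m) p (Gw m x @ v) = 0 \<longleftrightarrow> p \<in> insert 0 (insert x X)"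
    proof (cases "p = x")
      case True
      have m0: "0 < m" using x by simp
      have "foldl (deltaM m) 0 v = 0" by (rule iffD2[OF v(2)[rule_format, OF m0]]) simp
      then show ?thesis using True h by (simp only: if_True) simp
    next
      case False
      have "foldl (deltaM m) p v = 0 \<longleftrightarrow> p \<in> insert 0 X" using v(2)[rule_format, OF p] .
      then show ?thesis using False h by (simp only: if_False) simp
    qed
  qed
qed

lemma mod_inj1: assumes "(p::nat) < m" "p' \<le> p" "(p + C) mod m = (p' + C) mod m" shows "p = p'"
proof -
  have "m dvd (p + C) - (p' + C)" using assms by (subst mod_eq_dvd_iff_nat[symmetric]) simp_all
  then have "m dvd p - p'" by simp
  moreover have "p - p' < m" using assms by simp
  ultimately have "p - p' = 0" using nat_dvd_not_less by blast
  then show ?thesis using assms by simp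
qed

lemma mod_inj: assumes "(p::nat) < m" "p' < m" "(p + C) mod m = (p' + C) mod m" shows "p = p'"
proof (cases "p' \<le> p")
  case True then show ?thesis using mod_inj1[of p m p' C] assms by simp
next
  case False then show ?thesis using mod_inj1[of p' m p C] assms(2) assms(3)[symmetric] by simp
qed




lemma v0_any:
  assumes m2: "2 \<le> m" and T: "T \<subseteq> {0..<m}"
  shows "\<exists>v. cntd v = 0 \<and> (\<forall>p<m. foldl (deltaM m) p v = 0 \<longleftrightarrow> p \<in> T)"
proof (cases "T = {}")
  case True
  show ?thesis
  proof (rule exI[of _ "[b]"], intro conjI allI impI)
    show "cntd [b] = 0" by (simp add: cntd_def)
    fix p assume "p < m"
    show "foldl (deltaM m) p [b] = 0 \<longleftrightarrow> p \<in> T" using True by (simp add: deltaM_def)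
  qed
next
  case False
  then obtain j where j: "j \<in> T" by blast
  have jm: "j < m" using j T by auto
  define C where "C = j * (m - 1)"
  define T' where "T' = (\<lambda>p. (p + C) mod m) ` T"
  have m0: "0 < m" using m2 by simp
  have ms: "m = Suc (m - 1)" using m2 by simp
  have jC: "j + C = j * m" unfolding C_def by (subst (2) ms) (simp only: mult_Suc_right)
  have "(j + C) mod m \<in> T'" unfolding T'_def using j by blast
  then have z: "0 \<in> T'" unfolding jC by simp
  have T'sub: "T' \<subseteq> {0..<m}" unfolding T'_def using m0 by auto
  have fT': "finite T'" by (rule finite_subset[OF T'sub]) simp
  have X: "finite (T' - {0})" "T' - {0} \<subseteq> {1..<m}" using fT' T'sub by auto
  obtain v' where v': "cntd v' = 0" "\<forall>p<m. foldl (deltaM m) p v' = 0 \<longleftrightarrow> p \<in> insert 0 (T' - {0})"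
    using v0_with0[OF m2 X] by blast
  have ins: "insert 0 (T' - {0}) = T'" using z by blast
  show ?thesis
  proof (rule exI[of _ "replicate j a @ v'"], intro conjI allI impI)
    show "cntd (replicate j a @ v') = 0" using v'(1) by (simp add: cntd_def)
  next
    fix p assume p: "p < m"
    have "foldl (deltaM m) p (replicate j a @ v') = foldl (deltaM m) ((p + C) mod m) v'"
      by (simp only: foldl_append dM_rep_a[OF m2 p] C_def)
    moreover have "(p + C) mod m < m" using m0 by simp
    moreover have "(p + C) mod m \<in> T' \<longleftrightarrow> p \<in> T"
    proof
      assume "(p + C) mod m \<in> T'"
      then obtain q where q: "q \<in> T" "(p + C) mod m = (q + C) mod m" unfolding T'_def by blast
      have "q < m" using q T by auto
      then have "p = q" using mod_inj[OF p _ q(2)] by simp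
      then show "p \<in> T" using q by simp
    next
      assume "p \<in> T" then show "(p + C) mod m \<in> T'" unfolding T'_def by blast
    qed
    moreover have "foldl (deltaM m) ((p + C) mod m) v' = 0 \<longleftrightarrow> (p + C) mod m \<in> T'"
      if "(p + C) mod m < m" using v'(2)[rule_format, OF that] unfolding ins .
    ultimately show "foldl (deltaM m) p (replicate j a @ v') = 0 \<longleftrightarrow> p \<in> T" 
      by simp
  qed
qed




lemma is_dfa_M: "2 \<le> m \<Longrightarrow> is_dfa (dfaM m)"
  unfolding is_dfa_def dfaM_def using deltaM_lt by (auto simp: sigma4_def)

lemma is_dfa_N: "2 \<le> n \<Longrightarrow> is_dfa (dfaN n)"
  unfolding is_dfa_def dfaN_def using deltaN_lt by (auto simp: sigma4_def)

lemma lang_M: "w \<in> lang (dfaM m) \<longleftrightarrow> foldl (deltaM m) 0 w = 0"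
  by (simp add: lang_def dfaM_def sigma4_UNIV)

lemma lang_N: "0 < n \<Longrightarrow> w \<in> lang (dfaN n) \<longleftrightarrow> cntd w mod n = 0"
  by (simp add: lang_def dfaN_def sigma4_UNIV dN)

lemma rev_mem: "u \<in> rev_lang L \<longleftrightarrow> rev u \<in> L"
  unfolding rev_lang_def by (metis image_iff rev_rev_ident)

lemma cntd_rev: "cntd (rev w) = cntd w"
  by (simp add: cntd_def rev_filter[symmetric])

lemma cntd_app: "cntd (u @ v) = cntd u + cntd v"
  by (simp add: cntd_def)

definition Res :: "nat \<Rightarrow> nat \<Rightarrow> nat set \<Rightarrow> nat \<Rightarrow> sym list \<Rightarrow> bool" where
  "Res m n T k z = (foldl (deltaM m) 0 (rev z) \<in> T \<or> (k + cntd z) mod n = 0)"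

lemma word_exists:
  assumes m2: "2 \<le> m" and n2: "2 \<le> n" and T: "T \<subseteq> {0..<m}" and k: "k < n"
  shows "\<exists>u. \<forall>z. (u @ z \<in> rev_lang (lang (dfaM m)) \<union> lang (dfaN n)) \<longleftrightarrow> Res m n T k z"
proof -
  obtain v0 where v0: "cntd v0 = 0" "\<forall>p<m. foldl (deltaM m) p v0 = 0 \<longleftrightarrow> p \<in> T"
    using v0_any[OF m2 T] by blast
  define u where "u = rev (replicate k d @ v0)"
  have cr: "cntd (replicate k d) = k" by (simp add: cntd_def)
  have cu: "cntd u = k" unfolding u_def cntd_rev cntd_app cr v0(1) by simp
  show ?thesis
  proof (rule exI[of _ u], rule allI)
    fix z
    let ?p = "foldl (deltaM m) 0 (rev z)"
    have pm: "?p < m" using dM_lt[OF m2] m2 by simp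
    have r: "rev (u @ z) = rev z @ replicate k d @ v0" unfolding u_def by simp
    have "foldl (deltaM m) 0 (rev (u @ z)) = foldl (deltaM m) ?p v0"
      unfolding r foldl_append dM_rep_d ..
    then have A: "u @ z \<in> rev_lang (lang (dfaM m)) \<longleftrightarrow> ?p \<in> T"
      unfolding rev_mem lang_M using v0(2)[rule_format, OF pm] by simp
    have B: "u @ z \<in> lang (dfaN n) \<longleftrightarrow> (k + cntd z) mod n = 0"
      using n2 by (simp add: lang_N cntd_app cu)
    show "(u @ z \<in> rev_lang (lang (dfaM m)) \<union> lang (dfaN n)) \<longleftrightarrow> Res m n T k z"
      unfolding Res_def Un_iff A B ..
  qed
qed

lemma Res_test:
  assumes m2: "2 \<le> m" and q: "q < m"
  shows "Res m n T k (replicate s d @ replicate (m - q) a) \<longleftrightarrow> (q \<in> T \<or> (k + s) mod n = 0)"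
proof -
  have "foldl (deltaM m) 0 (rev (replicate s d @ replicate (m - q) a)) = q"
    using reach[OF m2 q] by (simp add: dM_rep_d)
  moreover have "cntd (replicate s d @ replicate (m - q) a) = s" by (simp add: cntd_def)
  ultimately show ?thesis unfolding Res_def by simp
qed




lemma sep_set:
  assumes m2: "2 \<le> m" and n2: "2 \<le> n" and q: "q < m" "q \<in> A" "q \<notin> B" and kB: "kB < n"
  shows "\<exists>z. Res m n A kA z \<and> \<not> Res m n B kB z"
proof -
  let ?z = "replicate (n - kB + 1) d @ replicate (m - q) a"
  have e: "kB + (n - kB + 1) = n + 1" using kB by simp
  have "(kB + (n - kB + 1)) mod n = 1" unfolding e using n2 by (simp add: mod_Suc)
  then have "\<not> Res m n B kB ?z" using Res_test[OF m2 q(1), of n B kB "n - kB + 1"] q by simp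
  moreover have "Res m n A kA ?z" using Res_test[OF m2 q(1), of n A kA "n - kB + 1"] q by simp
  ultimately show ?thesis by blast
qed

lemma nz_mod: assumes "(k::nat) < n" "k' < n" "k \<noteq> k'" shows "(k' + (n - k)) mod n \<noteq> 0"
proof (cases "k' < k")
  case True
  have "k' + (n - k) < n" using True assms by arith
  moreover have "0 < k' + (n - k)" using assms by arith
  ultimately show ?thesis by (simp add: not_le)
next
  case False
  then have e: "k' + (n - k) = (k' - k) + n" using assms by simp
  have lt: "k' - k < n" "0 < k' - k" using assms False by auto
  have "(k' + (n - k)) mod n = k' - k" by (simp only: e mod_add_self2 mod_less[OF lt(1)])
  then show ?thesis using lt by simp
qed

lemma distinguish:
  assumes m2: "2 \<le> m" and n2: "2 \<le> n"
    and T: "T \<subseteq> {0..<m}" and T': "T' \<subseteq> {0..<m}" and k: "k < n" and k': "k' < n"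
    and TQ: "T = {0..<m} \<Longrightarrow> k = 0" and TQ': "T' = {0..<m} \<Longrightarrow> k' = 0"
    and R: "\<forall>z. Res m n T k z = Res m n T' k' z"
  shows "T = T' \<and> k = k'"
proof -
  have TT: "T = T'"
  proof (rule ccontr)
    assume "T \<noteq> T'"
    then obtain q where "(q \<in> T \<and> q \<notin> T') \<or> (q \<in> T' \<and> q \<notin> T)" by blast
    then show False
    proof
      assume q: "q \<in> T \<and> q \<notin> T'"
      then have "q < m" using T by auto
      then obtain z where "Res m n T k z" "\<not> Res m n T' k' z" using sep_set[OF m2 n2, of q T T' k'] q k' by blast
      then show False using R by blast
    next
      assume q: "q \<in> T' \<and> q \<notin> T"
      then have "q < m" using T' by auto
      then obtain z where "Res m n T' k' z" "\<not> Res m n T k z" using sep_set[OF m2 n2, of q T' T k] q k by blast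
      then show False using R by blast
    qed
  qed
  moreover have "k = k'"
  proof (rule ccontr)
    assume kk: "k \<noteq> k'"
    then have "T \<noteq> {0..<m}" using TQ TQ' TT by auto
    then have "\<not> {0..<m} \<subseteq> T" using T by blast
    then obtain q0 where "q0 \<in> {0..<m}" "q0 \<notin> T" by (meson subsetI)
    then have q: "q0 < m" "q0 \<notin> T" by auto
    let ?z = "replicate (n - k) d @ replicate (m - q0) a"
    have "Res m n T k ?z" using Res_test[OF m2 q(1), of n T k "n - k"] k by simp
    moreover have "\<not> Res m n T k' ?z" using Res_test[OF m2 q(1), of n T k' "n - k"] q nz_mod[OF k k' kk] by simp
    ultimately show False using R TT by simp
  qed
  ultimately show ?thesis by simp
qed




lemma foldl_states: "is_dfa A \<Longrightarrow> q \<in> states A \<Longrightarrow> set w \<subseteq> alph A \<Longrightarrow> foldl (trans A) q w \<in> states A"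
  by (induction w arbitrary: q) (auto simp: is_dfa_def)

lemma lower:
  assumes m2: "2 \<le> m" and n2: "2 \<le> n"
    and A: "is_dfa A" "alph A = sigma4" "lang A = rev_lang (lang (dfaM m)) \<union> lang (dfaN n)"
  shows "2 ^ m * n - n + 1 \<le> card (states A)"
proof -
  let ?LL = "rev_lang (lang (dfaM m)) \<union> lang (dfaN n)"
  define I where "I = (Pow {0..<m} - {{0..<m}}) \<times> {..<n} \<union> {({0..<m}, 0::nat)}"
  have Iprop: "fst i \<subseteq> {0..<m} \<and> snd i < n \<and> (fst i = {0..<m} \<longrightarrow> snd i = 0)" if "i \<in> I" for i
    using that n2 unfolding I_def by auto
  define wd where "wd i = (SOME u. \<forall>z. (u @ z \<in> ?LL) \<longleftrightarrow> Res m n (fst i) (snd i) z)" for i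
  have wd: "\<forall>z. (wd i @ z \<in> ?LL) \<longleftrightarrow> Res m n (fst i) (snd i) z" if "i \<in> I" for i
  proof -
    have "\<exists>u. \<forall>z. (u @ z \<in> ?LL) \<longleftrightarrow> Res m n (fst i) (snd i) z"
      using word_exists[OF m2 n2, of "fst i" "snd i"] Iprop[OF that] by blast
    then show ?thesis unfolding wd_def by (rule someI_ex)
  qed
  define f where "f u = foldl (trans A) (start A) u" for u
  have alph: "set w \<subseteq> alph A" for w using A(2) by (simp add: sigma4_UNIV)
  have st: "start A \<in> states A" using A(1) by (simp add: is_dfa_def)
  have fS: "f u \<in> states A" for u unfolding f_def using foldl_states[OF A(1) st alph] .
  have langA: "w \<in> ?LL \<longleftrightarrow> foldl (trans A) (start A) w \<in> final A" for w
  proof -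
    have "w \<in> lang A \<longleftrightarrow> foldl (trans A) (start A) w \<in> final A" using alph[of w] by (simp add: lang_def)
    then show ?thesis by (simp only: A(3))
  qed
  have inj: "inj_on (f \<circ> wd) I"
  proof (rule inj_onI)
    fix i j assume i: "i \<in> I" and j: "j \<in> I" and eq: "(f \<circ> wd) i = (f \<circ> wd) j"
    have "\<forall>z. Res m n (fst i) (snd i) z = Res m n (fst j) (snd j) z"
    proof
      fix z
      have "Res m n (fst i) (snd i) z \<longleftrightarrow> foldl (trans A) (f (wd i)) z \<in> final A"
        using wd[OF i] langA[of "wd i @ z"] unfolding f_def by simp
      moreover have "Res m n (fst j) (snd j) z \<longleftrightarrow> foldl (trans A) (f (wd j)) z \<in> final A"
        using wd[OF j] langA[of "wd j @ z"] unfolding f_def by simp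
      ultimately show "Res m n (fst i) (snd i) z = Res m n (fst j) (snd j) z" using eq by simp
    qed
    then have "fst i = fst j \<and> snd i = snd j"
      using distinguish[OF m2 n2] Iprop[OF i] Iprop[OF j] by blast
    then show "i = j" by (simp add: prod_eq_iff)
  qed
  have fin: "finite (states A)" using A(1) by (simp add: is_dfa_def)
  have le: "card I \<le> card (states A)"
    by (rule card_inj_on_le[OF inj _ fin]) (use fS in auto)
  have "card I = (2 ^ m - 1) * n + 1"
  proof -
    have nin: "({0..<m}, 0) \<notin> (Pow {0..<m} - {{0..<m}}) \<times> {..<n}" by simp
    have c1: "card (Pow {0..<m} - {{0..<m::nat}}) = 2 ^ m - 1"
      by (simp add: card_Diff_singleton card_Pow)
    have "card I = card ((Pow {0..<m} - {{0..<m}}) \<times> {..<n}) + 1"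
      unfolding I_def using nin by (simp add: card_Un_disjoint)
    also have "\<dots> = (2 ^ m - 1) * n + 1" by (simp add: card_cartesian_product c1)
    finally show ?thesis .
  qed
  also have "\<dots> = 2 ^ m * n - n + 1" by (simp add: diff_mult_distrib)
  finally show ?thesis using le by simp
qed

theorem theorem8:
  fixes m n :: nat
  assumes "m \<ge> 2" and "n \<ge> 2"
  shows "(\<exists>M N :: (nat, sym) dfa. is_dfa M \<and> is_dfa N \<and> alph M = alph N
            \<and> card (states M) = m \<and> card (states N) = n
            \<and> union_rev_lower_bound M N (2 ^ m * n - n + 1))
       \<and> (is_dfa (dfaM m) \<and> is_dfa (dfaN n)
            \<and> union_rev_lower_bound (dfaM m) (dfaN n) (2 ^ m * n - n + 1))"
proof -
  have L: "union_rev_lower_bound (dfaM m) (dfaN n) (2 ^ m * n - n + 1)"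
    unfolding union_rev_lower_bound_def
  proof (intro allI impI)
    fix A :: "(nat, sym) dfa"
    assume "is_dfa A \<and> alph A = alph (dfaM m) \<and> lang A = rev_lang (lang (dfaM m)) \<union> lang (dfaN n)"
    then show "2 ^ m * n - n + 1 \<le> card (states A)"
      using lower[OF assms, of A] by (simp add: dfaM_def)
  qed
  have D: "is_dfa (dfaM m)" "is_dfa (dfaN n)" using is_dfa_M is_dfa_N assms by auto
  have E: "alph (dfaM m) = alph (dfaN n)" "card (states (dfaM m)) = m" "card (states (dfaN n)) = n"
    by (simp_all add: dfaM_def dfaN_def)
  show ?thesis using L D E by blast
qed


end
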